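(* Let $z_1,\dots,z_n\in\mathbb C$ be pairwise distinct and $\mu_1,\dots,\mu_n$ variables; set $f_a(x)=(x+\mu_a)e^{z_ax}$ and $h_a=-\mu_a-\sum_{b\ne a}\frac1{z_a-z_b}$, $a=1,\dots,n$. Let $$W(u,x)=e^{-ux-\sum_{a=1}^nz_ax}\,\mathrm{Wr}[f_1(x),\dots,f_n(x),e^{ux}],\qquad W_0(x)=e^{-\sum_{a=1}^nz_ax}\,\mathrm{Wr}[f_1(x),\dots,f_n(x)].$$ Then $$W(u,x)=\Delta\cdot\det\bigl((u-Z)(x-Q)-1\bigr),\qquad W_0(x)=\Delta\cdot\det(x-Q).$$
   Context: For functions $g_1,\dots,g_m$ of $x$, $\mathrm{Wr}[g_1,\dots,g_m]=\det\bigl(g_k^{(l-1)}\bigr)_{k,l=1}^m$ is the Wronskian (derivatives in $x$). $\Delta=\prod_{1\le a<b\le n}(z_b-z_a)$. $Z=\mathrm{diag}(z_1,\dots,z_n)$, and $Q$ is the $n\times n$ matrix with $Q_{aa}=h_a$ and $Q_{ab}=1/(z_b-z_a)$ for $a\ne b$. *)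

theory Defs
  imports Complex_Main "HOL-Analysis.Derivative" "Jordan_Normal_Form.Determinant"
begin

definition wronskian :: "(complex \<Rightarrow> complex) list \<Rightarrow> complex \<Rightarrow> complex" where
  "wronskian gs x = det (mat (length gs) (length gs) (\<lambda>(k, l). (deriv ^^ l) (gs ! k) x))"

definition Delta :: "nat \<Rightarrow> (nat \<Rightarrow> complex) \<Rightarrow> complex" where
  "Delta n z = (\<Prod>b<n. \<Prod>a<b. (z b - z a))"

definition hh :: "nat \<Rightarrow> (nat \<Rightarrow> complex) \<Rightarrow> (nat \<Rightarrow> complex) \<Rightarrow> nat \<Rightarrow> complex" where
  "hh n z \<mu> a = - \<mu> a - (\<Sum>b\<in>{..<n} - {a}. 1 / (z a - z b))"

definition Zmat :: "nat \<Rightarrow> (nat \<Rightarrow> complex) \<Rightarrow> complex mat" where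
  "Zmat n z = mat n n (\<lambda>(a, b). if a = b then z a else 0)"

definition Qmat :: "nat \<Rightarrow> (nat \<Rightarrow> complex) \<Rightarrow> (nat \<Rightarrow> complex) \<Rightarrow> complex mat" where
  "Qmat n z \<mu> = mat n n (\<lambda>(a, b). if a = b then hh n z \<mu> a else 1 / (z b - z a))"

definition fa :: "(nat \<Rightarrow> complex) \<Rightarrow> (nat \<Rightarrow> complex) \<Rightarrow> nat \<Rightarrow> complex \<Rightarrow> complex" where
  "fa z \<mu> a x = (x + \<mu> a) * exp (z a * x)"

end

theory Submission
  imports Defs "HOL-Computational_Algebra.Polynomial"
begin

definition dg :: "nat \<Rightarrow> (nat \<Rightarrow> 'a::comm_ring_1) \<Rightarrow> 'a mat" where
  "dg n f = mat n n (\<lambda>(i,j). if i = j then f i else 0)"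

lemma dg_carrier[simp]: "dg n f \<in> carrier_mat n n" by (simp add: dg_def)

lemma mult_entry:
  fixes A B :: "'a::comm_ring_1 mat"
  assumes "A \<in> carrier_mat n k" "B \<in> carrier_mat k m" "i < n" "j < m"
  shows "(A * B) $$ (i,j) = (\<Sum>l<k. A $$ (i,l) * B $$ (l,j))"
  using assms by (auto simp: scalar_prod_def atLeast0LessThan intro!: sum.cong)

lemma dg_mult_left:
  assumes M: "M \<in> carrier_mat n m"
  shows "dg n f * M = mat n m (\<lambda>(i,j). f i * M $$ (i,j))"
proof (rule eq_matI)
  fix i j assume "i < dim_row (mat n m (\<lambda>(i,j). f i * M $$ (i,j)))"
    "j < dim_col (mat n m (\<lambda>(i,j). f i * M $$ (i,j)))"
  hence i: "i < n" and j: "j < m" by auto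
  have "(dg n f * M) $$ (i,j) = (\<Sum>l<n. dg n f $$ (i,l) * M $$ (l,j))"
    by (rule mult_entry[OF dg_carrier M i j])
  also have "\<dots> = (\<Sum>l<n. if l = i then f i * M $$ (i,j) else 0)"
    using i by (intro sum.cong) (auto simp: dg_def)
  also have "\<dots> = f i * M $$ (i,j)" using i by simp
  finally show "(dg n f * M) $$ (i,j) = mat n m (\<lambda>(i,j). f i * M $$ (i,j)) $$ (i,j)"
    using i j by simp
qed (use M in \<open>auto simp: dg_def\<close>)

lemma dg_mult_right:
  assumes M: "M \<in> carrier_mat m n"
  shows "M * dg n f = mat m n (\<lambda>(i,j). M $$ (i,j) * f j)"
proof (rule eq_matI)
  fix i j assume "i < dim_row (mat m n (\<lambda>(i,j). M $$ (i,j) * f j))"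
    "j < dim_col (mat m n (\<lambda>(i,j). M $$ (i,j) * f j))"
  hence i: "i < m" and j: "j < n" by auto
  have "(M * dg n f) $$ (i,j) = (\<Sum>l<n. M $$ (i,l) * dg n f $$ (l,j))"
    by (rule mult_entry[OF M dg_carrier i j])
  also have "\<dots> = (\<Sum>l<n. if l = j then M $$ (i,j) * f j else 0)"
    using j by (intro sum.cong) (auto simp: dg_def)
  also have "\<dots> = M $$ (i,j) * f j" using j by simp
  finally show "(M * dg n f) $$ (i,j) = mat m n (\<lambda>(i,j). M $$ (i,j) * f j) $$ (i,j)"
    using i j by simp
qed (use M in \<open>auto simp: dg_def\<close>)

lemma prod_list_upt: "prod_list (map f [0..<k]) = (\<Prod>i<k. (f i :: 'a::comm_monoid_mult))"
  by (induction k) (auto simp: lessThan_Suc mult.commute)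

lemma det_dg: "det (dg n f) = (\<Prod>i<n. f i)"
proof -
  have "upper_triangular (dg n f)" by (auto simp: dg_def upper_triangular_def)
  hence "det (dg n f) = prod_list (diag_mat (dg n f))"
    using det_upper_triangular dg_carrier by blast
  also have "diag_mat (dg n f) = map f [0..<n]"
    by (auto simp: diag_mat_def dg_def intro!: nth_equalityI)
  also have "prod_list (map f [0..<n]) = (\<Prod>i<n. f i)"
    by (rule prod_list_upt)
  finally show ?thesis .
qed

lemma last_row_reduce:
  fixes M :: "'a::comm_ring_1 mat"
  assumes M: "M \<in> carrier_mat (Suc n) (Suc n)"
    and last: "\<And>l. l < Suc n \<Longrightarrow> M $$ (n, l) = u ^ l"
  shows "det M = (-1)^n * det (mat n n (\<lambda>(a,k). M $$ (a, Suc k) - u * M $$ (a, k)))"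
proof -
  define E :: "'a mat" where
    "E = mat (Suc n) (Suc n) (\<lambda>(i,j). if i = j then 1 else if Suc i = j then - u else 0)"
  have E: "E \<in> carrier_mat (Suc n) (Suc n)" by (simp add: E_def)
  have detE: "det E = 1"
  proof -
    have "upper_triangular E" by (auto simp: E_def upper_triangular_def)
    hence "det E = prod_list (diag_mat E)" using det_upper_triangular E by blast
    also have "diag_mat E = map (\<lambda>i. E $$ (i,i)) [0..<Suc n]"
      by (simp add: diag_mat_def E_def)
    also have "prod_list (map (\<lambda>i. E $$ (i,i)) [0..<Suc n]) = (\<Prod>i<Suc n. E $$ (i,i))"
      by (rule prod_list_upt)
    also have "\<dots> = 1" by (intro prod.neutral ballI) (simp add: E_def)
    finally show ?thesis .
  qed
  have ME: "M * E \<in> carrier_mat (Suc n) (Suc n)" using M E by auto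
  have entry: "(M*E) $$ (a,j) = (if j = 0 then M $$ (a,0) else M $$ (a,j) - u * M $$ (a, j - 1))"
    if aj: "a < Suc n" "j < Suc n" for a j
  proof -
    have "(M*E) $$ (a,j) = (\<Sum>l<Suc n. M $$ (a,l) * E $$ (l,j))" using mult_entry[OF M E aj] .
    also have "\<dots> = (\<Sum>l<Suc n. (if l = j then M $$ (a,l) else 0)
        + (if Suc l = j then - u * M $$ (a,l) else 0))"
      using aj by (intro sum.cong) (auto simp: E_def)
    also have "\<dots> = M $$ (a,j) + (\<Sum>l<Suc n. if Suc l = j then - u * M $$ (a,l) else 0)"
      using aj by (simp add: sum.distrib)
    also have "\<dots> = (if j = 0 then M $$ (a,0) else M $$ (a,j) - u * M $$ (a, j - 1))"
    proof (cases j)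
      case 0 then show ?thesis by simp
    next
      case (Suc j')
      have "(\<Sum>l<Suc n. if Suc l = j then - u * M $$ (a,l) else 0)
          = (\<Sum>l<Suc n. if l = j' then - u * M $$ (a,l) else 0)"
        using Suc by (intro sum.cong) auto
      also have "\<dots> = - u * M $$ (a,j')" using Suc aj by simp
      finally show ?thesis using Suc by simp
    qed
    finally show ?thesis .
  qed
  have "det M = det (M * E)" using det_mult[OF M E] detE by simp
  also have "\<dots> = (\<Sum>j<Suc n. (M*E) $$ (n,j) * cofactor (M*E) n j)"
    by (rule laplace_expansion_row[OF ME]) simp
  also have "\<dots> = (M*E) $$ (n,0) * cofactor (M*E) n 0
      + (\<Sum>j<n. (M*E) $$ (n,Suc j) * cofactor (M*E) n (Suc j))"
    by (rule sum.lessThan_Suc_shift)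
  also have "(\<Sum>j<n. (M*E) $$ (n,Suc j) * cofactor (M*E) n (Suc j)) = 0"
    by (intro sum.neutral ballI) (simp add: entry last)
  also have "(M*E) $$ (n,0) = 1" by (simp add: entry last)
  also have "cofactor (M*E) n 0 = (-1)^n * det (mat_delete (M*E) n 0)"
    by (simp add: cofactor_def)
  also have "mat_delete (M*E) n 0 = mat n n (\<lambda>(a,k). M $$ (a, Suc k) - u * M $$ (a, k))"
    using M E by (auto simp: mat_delete_def entry intro!: eq_matI)
  finally show ?thesis by simp
qed




lemma vandermonde: "det (mat n n (\<lambda>(a,l). (z a::complex) ^ l)) = Delta n z"
proof (induction n)
  case 0 show ?case by (simp add: Delta_def det_def)
next
  case (Suc n)
  let ?M = "mat (Suc n) (Suc n) (\<lambda>(a,l). z a ^ l)"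
  have "det ?M = (-1)^n * det (mat n n (\<lambda>(a,k). ?M $$ (a, Suc k) - z n * ?M $$ (a,k)))"
    by (rule last_row_reduce) auto
  also have "mat n n (\<lambda>(a,k). ?M $$ (a, Suc k) - z n * ?M $$ (a,k))
      = dg n (\<lambda>a. z a - z n) * mat n n (\<lambda>(a,l). z a ^ l)"
    by (subst dg_mult_left) (auto intro!: eq_matI simp: algebra_simps)
  also have "det \<dots> = (\<Prod>a<n. z a - z n) * Delta n z"
    by (subst det_mult[OF dg_carrier]) (auto simp: det_dg Suc.IH)
  also have "(-1)^n * ((\<Prod>a<n. z a - z n) * Delta n z) = (\<Prod>a<n. z n - z a) * Delta n z"
  proof -
    have "(\<Prod>a<n. z n - z a) = (\<Prod>a<n. - (z a - z n))" by simp
    also have "\<dots> = (-1)^n * (\<Prod>a<n. z a - z n)" by (subst prod_uminus) simp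
    finally show ?thesis by simp
  qed
  also have "\<dots> = Delta (Suc n) z" by (simp add: Delta_def)
  finally show ?case .
qed

lemma aux_pow: "(c::complex) * (of_nat l * c ^ (l - 1)) = of_nat l * c ^ l"
  by (cases l) auto

lemma deriv_fa:
  "(deriv ^^ l) (fa z \<mu> a) = (\<lambda>t. exp (z a * t) * (z a ^ l * (t + \<mu> a) + of_nat l * z a ^ (l - 1)))"
proof (induction l)
  case 0 show ?case by (simp add: fa_def fun_eq_iff mult.commute)
next
  case (Suc l)
  have "(deriv ^^ Suc l) (fa z \<mu> a) = deriv ((deriv ^^ l) (fa z \<mu> a))" by simp
  also have "\<dots> = (\<lambda>t. exp (z a * t) * (z a ^ Suc l * (t + \<mu> a) + of_nat (Suc l) * z a ^ (Suc l - 1)))"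
    unfolding Suc.IH
  proof (rule ext, rule DERIV_imp_deriv)
    fix t
    have "((\<lambda>t. exp (z a * t) * (z a ^ l * (t + \<mu> a) + of_nat l * z a ^ (l - 1))) has_field_derivative
        (exp (z a * t) * z a) * (z a ^ l * (t + \<mu> a) + of_nat l * z a ^ (l - 1)) + exp (z a * t) * (z a ^ l)) (at t)"
      by (auto intro!: derivative_eq_intros)
    moreover have "(exp (z a * t) * z a) * (z a ^ l * (t + \<mu> a) + of_nat l * z a ^ (l - 1)) + exp (z a * t) * (z a ^ l)
        = exp (z a * t) * (z a ^ Suc l * (t + \<mu> a) + of_nat (Suc l) * z a ^ (Suc l - 1))"
      using aux_pow[of "z a" l] by (simp add: algebra_simps)
    ultimately show "((\<lambda>t. exp (z a * t) * (z a ^ l * (t + \<mu> a) + of_nat l * z a ^ (l - 1))) has_field_derivative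
        exp (z a * t) * (z a ^ Suc l * (t + \<mu> a) + of_nat (Suc l) * z a ^ (Suc l - 1))) (at t)"
      by simp
  qed
  finally show ?case .
qed

lemma deriv_exp: "(deriv ^^ l) (\<lambda>t. exp (u * t)) = (\<lambda>t. u ^ l * exp (u * t))"
proof (induction l)
  case 0 show ?case by simp
next
  case (Suc l)
  have "(deriv ^^ Suc l) (\<lambda>t. exp (u * t)) = deriv ((deriv ^^ l) (\<lambda>t. exp (u * t)))" by simp
  also have "\<dots> = (\<lambda>t. u ^ Suc l * exp (u * t))"
    unfolding Suc.IH
  proof (rule ext, rule DERIV_imp_deriv)
    fix t
    have "((\<lambda>t. u ^ l * exp (u * t)) has_field_derivative u ^ l * (exp (u * t) * u)) (at t)"
      by (auto intro!: derivative_eq_intros)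
    then show "((\<lambda>t. u ^ l * exp (u * t)) has_field_derivative u ^ Suc l * exp (u * t)) (at t)"
      by (simp add: algebra_simps)
  qed
  finally show ?case .
qed

definition om :: "nat \<Rightarrow> (nat \<Rightarrow> complex) \<Rightarrow> nat \<Rightarrow> complex" where
  "om n z a = (\<Prod>c\<in>{..<n}-{a}. z a - z c)"

definition Lp :: "nat \<Rightarrow> (nat \<Rightarrow> complex) \<Rightarrow> nat \<Rightarrow> complex poly" where
  "Lp n z b = smult (1 / om n z b) (\<Prod>c\<in>{..<n}-{b}. [:- z c, 1:])"

definition Bm :: "nat \<Rightarrow> (nat \<Rightarrow> complex) \<Rightarrow> nat \<Rightarrow> nat \<Rightarrow> complex" where
  "Bm n z a b = poly (pderiv (Lp n z b)) (z a)"

definition Cm :: "nat \<Rightarrow> (nat \<Rightarrow> complex) \<Rightarrow> nat \<Rightarrow> nat \<Rightarrow> complex" where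
  "Cm n z a b = (if a = b then (\<Sum>c\<in>{..<n}-{a}. 1 / (z a - z c)) else 1 / (z a - z b))"

lemma om_nz:
  assumes inj: "inj_on z {..<n}" and a: "a < n"
  shows "om n z a \<noteq> 0"
proof -
  have "z a - z c \<noteq> 0" if "c \<in> {..<n}-{a}" for c
    using that a inj_onD[OF inj, of a c] by auto
  thus ?thesis unfolding om_def by (subst prod_zero_iff) auto
qed

lemma poly_Lp:
  assumes inj: "inj_on z {..<n}" and a: "a < n" and b: "b < n"
  shows "poly (Lp n z b) (z a) = (if a = b then 1 else 0)"
proof -
  have "poly (Lp n z b) (z a) = (1 / om n z b) * (\<Prod>c\<in>{..<n}-{b}. z a - z c)"
    by (simp add: Lp_def poly_prod)
  also have "\<dots> = (if a = b then 1 else 0)"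
  proof (cases "a = b")
    case True
    then show ?thesis using om_nz[OF inj b] by (simp add: om_def)
  next
    case False
    have "(\<Prod>c\<in>{..<n}-{b}. z a - z c) = 0"
      by (rule prod_zero) (use False a in auto)
    then show ?thesis using False by simp
  qed
  finally show ?thesis .
qed

lemma degree_Lp:
  assumes b: "b < n"
  shows "degree (Lp n z b) \<le> n - 1"
proof -
  have "degree (Lp n z b) \<le> degree (\<Prod>c\<in>{..<n}-{b}. [:- z c, 1:])"
    unfolding Lp_def by (rule degree_smult_le)
  also have "\<dots> \<le> sum (degree \<circ> (\<lambda>c. [:- z c, 1:])) ({..<n}-{b})"
    by (rule degree_prod_sum_le) simp
  also have "\<dots> = card ({..<n}-{b})" by simp
  also have "\<dots> = n - 1" using b by simp
  finally show ?thesis .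
qed

lemma pderiv_sum': "pderiv (sum f A) = (\<Sum>x\<in>A. pderiv (f x))"
  by (induction A rule: infinite_finite_induct) (auto simp: pderiv_add)

lemma interp:
  assumes inj: "inj_on z {..<n}" and l: "l < n"
  shows "(\<Sum>b<n. smult (z b ^ l) (Lp n z b)) = monom 1 l"
proof (rule poly_eqI_degree[where A = "z ` {..<n}"])
  fix t assume "t \<in> z ` {..<n}"
  then obtain a where a: "a < n" and t: "t = z a" by auto
  have "poly (\<Sum>b<n. smult (z b ^ l) (Lp n z b)) t = (\<Sum>b<n. z b ^ l * poly (Lp n z b) (z a))"
    by (simp add: poly_sum t)
  also have "\<dots> = (\<Sum>b<n. if b = a then z a ^ l else 0)"
    by (intro sum.cong) (auto simp: poly_Lp[OF inj a])
  also have "\<dots> = z a ^ l" using a by simp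
  finally show "poly (\<Sum>b<n. smult (z b ^ l) (Lp n z b)) t = poly (monom 1 l) t"
    by (simp add: poly_monom t)
next
  have c: "card (z ` {..<n}) = n" using card_image[OF inj] by simp
  have "degree (\<Sum>b<n. smult (z b ^ l) (Lp n z b)) \<le> n - 1"
    by (intro degree_sum_le order_trans[OF degree_smult_le] degree_Lp) auto
  then show "degree (\<Sum>b<n. smult (z b ^ l) (Lp n z b)) < card (z ` {..<n})"
    using c l by linarith
  show "degree (monom (1::complex) l) < card (z ` {..<n})"
    using c l by (simp add: degree_monom_eq)
qed

lemma Bsum:
  assumes inj: "inj_on z {..<n}" and a: "a < n" and l: "l < n"
  shows "(\<Sum>b<n. Bm n z a b * z b ^ l) = of_nat l * z a ^ (l - 1)"
proof -
  have "poly (pderiv (\<Sum>b<n. smult (z b ^ l) (Lp n z b))) (z a) = poly (pderiv (monom 1 l)) (z a)"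
    using interp[OF inj l] by simp
  thus ?thesis
    by (simp add: pderiv_sum' pderiv_smult poly_sum pderiv_monom poly_monom Bm_def mult.commute)
qed

lemma BD:
  assumes inj: "inj_on z {..<n}" and a: "a < n" and b: "b < n"
  shows "Bm n z a b * om n z b = om n z a * Cm n z a b"
proof -
  have nz: "z p - z q \<noteq> 0" if "p < n" "q < n" "p \<noteq> q" for p q
    using that inj_onD[OF inj, of p q] by auto
  have P: "poly (pderiv (\<Prod>c\<in>{..<n}-{b}. [:- z c, 1:])) (z a)
      = (\<Sum>d\<in>{..<n}-{b}. \<Prod>c\<in>{..<n}-{b}-{d}. z a - z c)"
    by (simp add: pderiv_prod poly_sum poly_prod pderiv_pCons)
  have key: "Bm n z a b * om n z b = (\<Sum>d\<in>{..<n}-{b}. \<Prod>c\<in>{..<n}-{b}-{d}. z a - z c)"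
    using om_nz[OF inj b] by (simp add: Bm_def Lp_def pderiv_smult P)
  show ?thesis
  proof (cases "a = b")
    case True
    have "om n z a * Cm n z a b = (\<Sum>d\<in>{..<n}-{a}. om n z a * (1 / (z a - z d)))"
      using True by (simp add: Cm_def sum_distrib_left)
    also have "\<dots> = (\<Sum>d\<in>{..<n}-{a}. \<Prod>c\<in>{..<n}-{a}-{d}. z a - z c)"
    proof (intro sum.cong refl)
      fix d assume d: "d \<in> {..<n}-{a}"
      have "om n z a = (z a - z d) * (\<Prod>c\<in>{..<n}-{a}-{d}. z a - z c)"
        unfolding om_def using d by (subst prod.remove[of _ d]) auto
      moreover have "z a - z d \<noteq> 0" using nz[of a d] d a by auto
      ultimately show "om n z a * (1 / (z a - z d)) = (\<Prod>c\<in>{..<n}-{a}-{d}. z a - z c)"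
        by simp
    qed
    finally show ?thesis using key True by simp
  next
    case False
    have "(\<Sum>d\<in>{..<n}-{b}. \<Prod>c\<in>{..<n}-{b}-{d}. z a - z c)
        = (\<Sum>d\<in>{..<n}-{b}. if d = a then (\<Prod>c\<in>{..<n}-{b}-{a}. z a - z c) else 0)"
    proof (intro sum.cong refl)
      fix d assume d: "d \<in> {..<n}-{b}"
      show "(\<Prod>c\<in>{..<n}-{b}-{d}. z a - z c)
          = (if d = a then (\<Prod>c\<in>{..<n}-{b}-{a}. z a - z c) else 0)"
      proof (cases "d = a")
        case False
        have "(\<Prod>c\<in>{..<n}-{b}-{d}. z a - z c) = 0"
          by (rule prod_zero) (use False a \<open>a \<noteq> b\<close> in auto)
        then show ?thesis using False by simp
      qed simp
    qed
    also have "\<dots> = (\<Prod>c\<in>{..<n}-{b}-{a}. z a - z c)" using False a by simp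
    also have "\<dots> = om n z a * Cm n z a b"
    proof -
      have "om n z a = (z a - z b) * (\<Prod>c\<in>{..<n}-{a}-{b}. z a - z c)"
        unfolding om_def using b False by (subst prod.remove[of _ b]) auto
      moreover have "z a - z b \<noteq> 0" using nz[of a b] a b False by auto
      moreover have "{..<n}-{a}-{b} = {..<n}-{b}-{a}" by auto
      ultimately show ?thesis using False by (simp add: Cm_def)
    qed
    finally show ?thesis using key by simp
  qed
qed

definition Gm :: "nat \<Rightarrow> (nat \<Rightarrow> complex) \<Rightarrow> (nat \<Rightarrow> complex) \<Rightarrow> complex \<Rightarrow> (nat \<Rightarrow> nat \<Rightarrow> complex) \<Rightarrow> complex mat" where
  "Gm n y w s K = mat n n (\<lambda>(a,b). w a * ((if a = b then y a else 0) + K a b) + (if a = b then s else 0))"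

lemma Gm_carrier[simp]: "Gm n y w s K \<in> carrier_mat n n" by (simp add: Gm_def)

lemma GV:
  assumes inj: "inj_on z {..<n}"
  shows "Gm n y w s (Bm n z) * mat n n (\<lambda>(a,l). z a ^ l)
     = mat n n (\<lambda>(a,l). w a * (z a ^ l * y a + of_nat l * z a ^ (l - 1)) + s * z a ^ l)"
proof (rule eq_matI)
  fix a l assume "a < dim_row (mat n n (\<lambda>(a,l). w a * (z a ^ l * y a + of_nat l * z a ^ (l - 1)) + s * z a ^ l))"
    "l < dim_col (mat n n (\<lambda>(a,l). w a * (z a ^ l * y a + of_nat l * z a ^ (l - 1)) + s * z a ^ l))"
  hence a: "a < n" and l: "l < n" by auto
  have "(Gm n y w s (Bm n z) * mat n n (\<lambda>(a,l). z a ^ l)) $$ (a,l)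
      = (\<Sum>b<n. Gm n y w s (Bm n z) $$ (a,b) * mat n n (\<lambda>(a,l). z a ^ l) $$ (b,l))"
    by (rule mult_entry[OF Gm_carrier _ a l]) simp
  also have "\<dots> = (\<Sum>b<n. (if b = a then (w a * y a + s) * z a ^ l else 0) + w a * (Bm n z a b * z b ^ l))"
    using a l by (intro sum.cong) (auto simp: Gm_def algebra_simps)
  also have "\<dots> = (w a * y a + s) * z a ^ l + w a * (\<Sum>b<n. Bm n z a b * z b ^ l)"
    using a by (simp add: sum.distrib sum_distrib_left)
  also have "\<dots> = w a * (z a ^ l * y a + of_nat l * z a ^ (l - 1)) + s * z a ^ l"
    using Bsum[OF inj a l] by (simp add: algebra_simps)
  finally show "(Gm n y w s (Bm n z) * mat n n (\<lambda>(a,l). z a ^ l)) $$ (a,l)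
      = mat n n (\<lambda>(a,l). w a * (z a ^ l * y a + of_nat l * z a ^ (l - 1)) + s * z a ^ l) $$ (a,l)"
    using a l by simp
qed (auto simp: Gm_def)

lemma GD:
  assumes inj: "inj_on z {..<n}"
  shows "Gm n y w s (Bm n z) * dg n (om n z) = dg n (om n z) * Gm n y w s (Cm n z)"
proof -
  have e: "(w a * ((if a = b then y a else 0) + Bm n z a b) + (if a = b then s else 0)) * om n z b
     = om n z a * (w a * ((if a = b then y a else 0) + Cm n z a b) + (if a = b then s else 0))"
    if a: "a < n" and b: "b < n" for a b
  proof -
    have h: "Bm n z a b * om n z b = om n z a * Cm n z a b" by (rule BD[OF inj a b])
    have "(w a * ((if a = b then y a else 0) + Bm n z a b) + (if a = b then s else 0)) * om n z b
      - om n z a * (w a * ((if a = b then y a else 0) + Cm n z a b) + (if a = b then s else 0))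
      = w a * (Bm n z a b * om n z b - om n z a * Cm n z a b)"
      by (cases "a = b") (simp_all add: algebra_simps)
    also have "\<dots> = 0" using h by simp
    finally show ?thesis by simp
  qed
  show ?thesis
    by (subst dg_mult_right[OF Gm_carrier], subst dg_mult_left[OF Gm_carrier])
      (auto intro!: eq_matI simp: e Gm_def)
qed

lemma detG:
  assumes inj: "inj_on z {..<n}"
  shows "det (Gm n y w s (Bm n z)) = det (Gm n y w s (Cm n z))"
proof -
  have nz: "det (dg n (om n z)) \<noteq> 0"
    using om_nz[OF inj] by (simp add: det_dg)
  have "det (Gm n y w s (Bm n z)) * det (dg n (om n z)) = det (dg n (om n z)) * det (Gm n y w s (Cm n z))"
    using GD[OF inj, of y w s] det_mult[OF Gm_carrier dg_carrier] det_mult[OF dg_carrier Gm_carrier] by metis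
  thus ?thesis using nz by simp
qed

lemma main_det:
  assumes inj: "inj_on z {..<n}"
  shows "det (mat n n (\<lambda>(a,l). w a * (z a ^ l * y a + of_nat l * z a ^ (l - 1)) + s * z a ^ l))
     = Delta n z * det (Gm n y w s (Cm n z))"
proof -
  have "det (mat n n (\<lambda>(a,l). w a * (z a ^ l * y a + of_nat l * z a ^ (l - 1)) + s * z a ^ l))
      = det (Gm n y w s (Bm n z)) * det (mat n n (\<lambda>(a,l). z a ^ l))"
    by (subst GV[OF inj, symmetric], rule det_mult) auto
  thus ?thesis using detG[OF inj] vandermonde by simp
qed

lemma XQ_eq: "x \<cdot>\<^sub>m 1\<^sub>m n - Qmat n z \<mu> = Gm n (\<lambda>a. x + \<mu> a) (\<lambda>_. 1) 0 (Cm n z)"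
proof -
  have m: "- (1 / (p - q)) = 1 / (q - p)" for p q :: complex
    by (simp add: minus_divide_right)
  show ?thesis
    by (rule eq_matI) (auto simp: Gm_def Qmat_def Cm_def hh_def m)
qed

lemma UZ_eq: "u \<cdot>\<^sub>m 1\<^sub>m n - Zmat n z = dg n (\<lambda>a. u - z a)"
  by (rule eq_matI) (auto simp: dg_def Zmat_def)

lemma wr_entry:
  assumes k: "k < n"
  shows "(map (fa z \<mu>) [0..<n] @ gs) ! k = fa z \<mu> k"
  using k by (simp add: nth_append)

theorem lemma4p1:
  fixes n :: nat and z \<mu> :: "nat \<Rightarrow> complex" and u x :: complex
  assumes "inj_on z {..<n}"
  shows "exp (- (u * x) - (\<Sum>a<n. z a) * x)
           * wronskian (map (fa z \<mu>) [0..<n] @ [\<lambda>t. exp (u * t)]) x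
         = Delta n z * det ((u \<cdot>\<^sub>m 1\<^sub>m n - Zmat n z) * (x \<cdot>\<^sub>m 1\<^sub>m n - Qmat n z \<mu>) - 1\<^sub>m n)
       \<and> exp (- ((\<Sum>a<n. z a) * x)) * wronskian (map (fa z \<mu>) [0..<n]) x
         = Delta n z * det (x \<cdot>\<^sub>m 1\<^sub>m n - Qmat n z \<mu>)"
proof
  note inj = assms
  define y where "y = (\<lambda>a. x + \<mu> a)"
  define S where "S = (\<Sum>a<n. z a)"
  have expS: "(\<Prod>a<n. exp (z a * x)) = exp (S * x)"
    by (simp add: S_def exp_sum sum_distrib_right)
  define M1 where "M1 = mat (Suc n) (Suc n) (\<lambda>(a,l). if a < n then z a ^ l * y a + of_nat l * z a ^ (l - 1) else u ^ l)"
  define e where "e = (\<lambda>a. if a < n then exp (z a * x) else exp (u * x))"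
  have M1c: "M1 \<in> carrier_mat (Suc n) (Suc n)" by (simp add: M1_def)
  have W1: "mat (Suc n) (Suc n) (\<lambda>(k, l). (deriv ^^ l) ((map (fa z \<mu>) [0..<n] @ [\<lambda>t. exp (u * t)]) ! k) x)
      = dg (Suc n) e * M1"
    by (subst dg_mult_left[OF M1c])
      (auto intro!: eq_matI simp: M1_def e_def nth_append deriv_fa deriv_exp y_def less_Suc_eq)
  have red: "mat n n (\<lambda>(a,k). M1 $$ (a, Suc k) - u * M1 $$ (a, k))
      = mat n n (\<lambda>(a,l). (z a - u) * (z a ^ l * y a + of_nat l * z a ^ (l - 1)) + 1 * z a ^ l)"
  proof (rule eq_matI)
    fix a k assume "a < dim_row (mat n n (\<lambda>(a,l). (z a - u) * (z a ^ l * y a + of_nat l * z a ^ (l - 1)) + 1 * z a ^ l))"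
      "k < dim_col (mat n n (\<lambda>(a,l). (z a - u) * (z a ^ l * y a + of_nat l * z a ^ (l - 1)) + 1 * z a ^ l))"
    hence a: "a < n" and k: "k < n" by auto
    show "mat n n (\<lambda>(a,k). M1 $$ (a, Suc k) - u * M1 $$ (a, k)) $$ (a,k)
      = mat n n (\<lambda>(a,l). (z a - u) * (z a ^ l * y a + of_nat l * z a ^ (l - 1)) + 1 * z a ^ l) $$ (a,k)"
      using a k by (cases k) (simp_all add: M1_def algebra_simps)
  qed auto
  have T: "(u \<cdot>\<^sub>m 1\<^sub>m n - Zmat n z) * (x \<cdot>\<^sub>m 1\<^sub>m n - Qmat n z \<mu>) - 1\<^sub>m n
      = (-1) \<cdot>\<^sub>m Gm n y (\<lambda>a. z a - u) 1 (Cm n z)"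
    unfolding UZ_eq XQ_eq y_def[symmetric]
    by (subst dg_mult_left[OF Gm_carrier]) (auto intro!: eq_matI simp: Gm_def algebra_simps)
  have "det M1 = (-1)^n * det (mat n n (\<lambda>(a,k). M1 $$ (a, Suc k) - u * M1 $$ (a, k)))"
    by (rule last_row_reduce[OF M1c]) (simp add: M1_def)
  also have "\<dots> = (-1)^n * (Delta n z * det (Gm n y (\<lambda>a. z a - u) 1 (Cm n z)))"
    unfolding red by (subst main_det[OF inj]) simp
  also have "det (Gm n y (\<lambda>a. z a - u) 1 (Cm n z))
      = (-1)^n * det ((u \<cdot>\<^sub>m 1\<^sub>m n - Zmat n z) * (x \<cdot>\<^sub>m 1\<^sub>m n - Qmat n z \<mu>) - 1\<^sub>m n)"
    unfolding T by (simp add: Gm_def)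
  finally have dM1: "det M1 = Delta n z * det ((u \<cdot>\<^sub>m 1\<^sub>m n - Zmat n z) * (x \<cdot>\<^sub>m 1\<^sub>m n - Qmat n z \<mu>) - 1\<^sub>m n)"
    by (simp add: power_mult_distrib[symmetric])
  have "wronskian (map (fa z \<mu>) [0..<n] @ [\<lambda>t. exp (u * t)]) x = det (dg (Suc n) e * M1)"
    unfolding wronskian_def using W1 by simp
  also have "\<dots> = (\<Prod>a<Suc n. e a) * det M1"
    by (simp add: det_mult[OF dg_carrier M1c] det_dg)
  also have "(\<Prod>a<Suc n. e a) = exp (S * x) * exp (u * x)"
    by (simp add: e_def expS[symmetric])
  finally have w1: "wronskian (map (fa z \<mu>) [0..<n] @ [\<lambda>t. exp (u * t)]) x = exp (S * x) * exp (u * x) * det M1" .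
  have "exp (- (u * x) - S * x) * (exp (S * x) * exp (u * x)) = exp (- (u * x) - S * x + (S * x + u * x))"
    by (simp only: exp_add)
  also have "\<dots> = 1" by simp
  finally have one: "exp (- (u * x) - S * x) * (exp (S * x) * exp (u * x)) = 1" .
  show "exp (- (u * x) - (\<Sum>a<n. z a) * x)
           * wronskian (map (fa z \<mu>) [0..<n] @ [\<lambda>t. exp (u * t)]) x
         = Delta n z * det ((u \<cdot>\<^sub>m 1\<^sub>m n - Zmat n z) * (x \<cdot>\<^sub>m 1\<^sub>m n - Qmat n z \<mu>) - 1\<^sub>m n)"
    unfolding S_def[symmetric] w1 dM1[symmetric]
    using one by (simp add: mult.assoc[symmetric])
next
  note inj = assms
  define y where "y = (\<lambda>a. x + \<mu> a)"
  define S where "S = (\<Sum>a<n. z a)"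
  have expS: "(\<Prod>a<n. exp (z a * x)) = exp (S * x)"
    by (simp add: S_def exp_sum sum_distrib_right)
  define A where "A = mat n n (\<lambda>(a,l). (\<lambda>_. 1) a * (z a ^ l * y a + of_nat l * z a ^ (l - 1)) + 0 * z a ^ l)"
  have Ac: "A \<in> carrier_mat n n" by (simp add: A_def)
  have W0: "mat n n (\<lambda>(k, l). (deriv ^^ l) (map (fa z \<mu>) [0..<n] ! k) x)
      = dg n (\<lambda>a. exp (z a * x)) * A"
    by (subst dg_mult_left[OF Ac]) (auto intro!: eq_matI simp: A_def deriv_fa y_def)
  have "wronskian (map (fa z \<mu>) [0..<n]) x = exp (S * x) * det A"
    unfolding wronskian_def using W0 by (simp add: det_mult[OF dg_carrier Ac] det_dg expS)
  moreover have "det A = Delta n z * det (x \<cdot>\<^sub>m 1\<^sub>m n - Qmat n z \<mu>)"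
    unfolding A_def XQ_eq y_def[symmetric] by (rule main_det[OF inj])
  moreover have "exp (- (S * x)) * exp (S * x) = 1" by (simp add: exp_minus)
  ultimately show "exp (- ((\<Sum>a<n. z a) * x)) * wronskian (map (fa z \<mu>) [0..<n]) x
         = Delta n z * det (x \<cdot>\<^sub>m 1\<^sub>m n - Qmat n z \<mu>)"
    unfolding S_def[symmetric] by (simp add: mult.assoc[symmetric])
qed

end
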